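(* Assume the capacities satisfy (C1)–(C3), and let $\gamma=\frac1{\tau-1}+\varepsilon<\frac12$ be as in (C3). Let $M$ be a random variable with $\mathbb P(M=m)=\lambda_m/l_N$, $1\le m\le N$, and let $d_N$ be a random variable with distribution $\{g^{(N)}_n\}_{n\ge0}$. Then $$\mathrm{Var}(\lambda_M)=O(N^\gamma)\qquad\text{and}\qquad\mathrm{Var}(d_N)=O(N^\gamma).$$
   Context: Capacities $\lambda_1,\dots,\lambda_N>0$ deterministic; $l_N=\sum_i\lambda_i$, $\mu_N=\frac1N\sum_i\lambda_i$, $\nu_N=\sum_i\lambda_i^2/\sum_i\lambda_i$, $f^{(N)}_n=\frac1N\sum_i e^{-\lambda_i}\frac{\lambda_i^n}{n!}$, $g^{(N)}_n=\frac{1}{N\mu_N}\sum_i e^{-\lambda_i}\frac{\lambda_i^{n+1}}{n!}$ ($n\ge0$); $d_{TV}(p,q)=\frac12\sum_j|p_j-q_j|$. (C1): there are $\mu\in(0,\infty)$, $\nu\in(1,\infty)$, $\alpha_1>0$ with $|\mu_N-\mu|,|\nu_N-\nu|=O(N^{-\alpha_1})$. (C2): there are $N$-independent sequences $f,g$ and $\alpha_2>0$ with $d_{TV}(f^{(N)},f),d_{TV}(g^{(N)},g)=O(N^{-\alpha_2})$. (C3): there is $\tau>3$ such that for every $\varepsilon>0$ (with $\gamma:=\frac1{\tau-1}+\varepsilon<\frac12$), $\limsup_N\frac1N\sum_i\lambda_i^{\tau-1-\varepsilon}<\infty$ and $\max_i\lambda_i\le N^\gamma$. *)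

theory Defs
  imports "HOL-Probability.Probability" "HOL-Library.Landau_Symbols"
begin

definition lN :: "(nat \<Rightarrow> nat \<Rightarrow> real) \<Rightarrow> nat \<Rightarrow> real" where
  "lN lam N = (\<Sum>i=1..N. lam N i)"

definition muN :: "(nat \<Rightarrow> nat \<Rightarrow> real) \<Rightarrow> nat \<Rightarrow> real" where
  "muN lam N = (1 / real N) * (\<Sum>i=1..N. lam N i)"

definition nuN :: "(nat \<Rightarrow> nat \<Rightarrow> real) \<Rightarrow> nat \<Rightarrow> real" where
  "nuN lam N = (\<Sum>i=1..N. (lam N i)^2) / (\<Sum>i=1..N. lam N i)"

definition fN :: "(nat \<Rightarrow> nat \<Rightarrow> real) \<Rightarrow> nat \<Rightarrow> nat \<Rightarrow> real" where
  "fN lam N n = (1 / real N) * (\<Sum>i=1..N. exp (- lam N i) * (lam N i)^n / fact n)"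

definition gN :: "(nat \<Rightarrow> nat \<Rightarrow> real) \<Rightarrow> nat \<Rightarrow> nat \<Rightarrow> real" where
  "gN lam N n = (1 / (real N * muN lam N)) * (\<Sum>i=1..N. exp (- lam N i) * (lam N i)^(n+1) / fact n)"

text \<open>Total variation distance of two sequences on nat (meaningful when the series converges).\<close>
definition dTV :: "(nat \<Rightarrow> real) \<Rightarrow> (nat \<Rightarrow> real) \<Rightarrow> real" where
  "dTV p q = (1/2) * (\<Sum>j. \<bar>p j - q j\<bar>)"

definition M_pmf :: "(nat \<Rightarrow> nat \<Rightarrow> real) \<Rightarrow> nat \<Rightarrow> nat pmf" where
  "M_pmf lam N = embed_pmf (\<lambda>m. if m \<in> {1..N} then lam N m / lN lam N else 0)"

definition d_pmf :: "(nat \<Rightarrow> nat \<Rightarrow> real) \<Rightarrow> nat \<Rightarrow> nat pmf" where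
  "d_pmf lam N = embed_pmf (gN lam N)"

end

theory Submission
  imports Defs
begin

lemma var_bound:
  fixes p :: "'a pmf" and X :: "'a \<Rightarrow> real"
  assumes "(\<integral>\<^sup>+x. ennreal ((X x)^2) \<partial>measure_pmf p) \<le> ennreal C" "C \<ge> 0"
  shows "measure_pmf.variance p X \<le> C"
proof -
  have fin: "(\<integral>\<^sup>+x. ennreal (norm ((X x)^2)) \<partial>measure_pmf p) < \<infinity>"
    using assms by (simp add: order_le_less_trans)
  have i2: "integrable (measure_pmf p) (\<lambda>x. (X x)^2)"
    by (rule integrableI_bounded) (use fin in auto)
  have i1: "integrable (measure_pmf p) X"
    by (rule measure_pmf.square_integrable_imp_integrable[OF _ i2]) simp
  have "measure_pmf.variance p X = measure_pmf.expectation p (\<lambda>x. (X x)^2) - (measure_pmf.expectation p X)^2"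
    by (rule measure_pmf.variance_eq[OF i1 i2])
  also have "\<dots> \<le> measure_pmf.expectation p (\<lambda>x. (X x)^2)" by simp
  also have "\<dots> = enn2real (\<integral>\<^sup>+x. ennreal ((X x)^2) \<partial>measure_pmf p)"
    by (rule integral_eq_nn_integral) auto
  also have "\<dots> \<le> C" using assms
    by (metis enn2real_ennreal enn2real_mono ennreal_neq_top top.not_eq_extremum) 
  finally show ?thesis .
qed

lemma poisson_sq:
  fixes r :: real assumes r: "r > 0"
  shows "(\<lambda>n. (real n)^2 * (r^n / fact n * exp (-r))) sums (r + r^2)"
proof -
  have e: "(\<lambda>n. r^n / fact n) sums exp r" using exp_converges[of r] by (simp add: divide_inverse mult.commute)
  have a: "(\<lambda>n. real n * (r^n / fact n)) sums (r * exp r)"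
  proof -
    have "(\<lambda>n. real (Suc n) * (r^(Suc n) / fact (Suc n))) = (\<lambda>n. r * (r^n / fact n))"
    proof (rule ext)
      fix n
      have "fact (Suc n) = (real (Suc n)) * (fact n :: real)" by (rule fact_Suc)
      then show "real (Suc n) * (r^(Suc n) / fact (Suc n)) = r * (r^n / fact n)"
        by (simp del: of_nat_Suc)
    qed
    with sums_mult[OF e, of r] have "(\<lambda>n. real (Suc n) * (r^(Suc n) / fact (Suc n))) sums (r * exp r)" by simp
    then show ?thesis by (subst (asm) sums_Suc_iff) simp
  qed
  have b: "(\<lambda>n. real n * (real n - 1) * (r^n / fact n)) sums (r^2 * exp r)"
  proof -
    have "(\<lambda>n. real (Suc (Suc n)) * (real (Suc (Suc n)) - 1) * (r^(Suc (Suc n)) / fact (Suc (Suc n)))) = (\<lambda>n. r^2 * (r^n / fact n))"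
    proof (rule ext)
      fix n
      have "fact (Suc (Suc n)) = (real (Suc (Suc n))) * (real (Suc n) * (fact n :: real))" by simp
      moreover have e2: "real (Suc (Suc n)) - 1 = real (Suc n)" by simp
      ultimately show "real (Suc (Suc n)) * (real (Suc (Suc n)) - 1) * (r^(Suc (Suc n)) / fact (Suc (Suc n))) = r^2 * (r^n / fact n)"
        unfolding e2 by (simp del: of_nat_Suc fact_Suc add: power2_eq_square)
    qed
    with sums_mult[OF e, of "r^2"] have "(\<lambda>n. real (Suc (Suc n)) * (real (Suc (Suc n)) - 1) * (r^(Suc (Suc n)) / fact (Suc (Suc n)))) sums (r^2 * exp r)" by simp
    then show ?thesis by (subst (asm) sums_Suc_iff, subst (asm) sums_Suc_iff) simp
  qed
  have "(\<lambda>n. (real n * (real n - 1) * (r^n / fact n) + real n * (r^n / fact n)) * exp (-r)) sums ((r^2 * exp r + r * exp r) * exp (-r))"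
    by (intro sums_mult2 sums_add a b)
  moreover have "(r^2 * exp r + r * exp r) * exp (-r) = r + r^2"
    by (simp add: field_simps exp_minus)
  moreover have "(\<lambda>n. (real n * (real n - 1) * (r^n / fact n) + real n * (r^n / fact n)) * exp (-r)) = (\<lambda>n. (real n)^2 * (r^n / fact n * exp (-r)))"
    by (rule ext) (simp add: field_simps power2_eq_square add_divide_distrib)
  ultimately show ?thesis by simp
qed

lemma poisson_sq_nn:
  fixes r :: real assumes r: "r > 0"
  shows "(\<integral>\<^sup>+n. ennreal ((real n)^2) \<partial>measure_pmf (poisson_pmf r)) = ennreal (r + r^2)"
proof -
  have "(\<integral>\<^sup>+n. ennreal ((real n)^2) \<partial>measure_pmf (poisson_pmf r)) = (\<integral>\<^sup>+n. ennreal (pmf (poisson_pmf r) n) * ennreal ((real n)^2) \<partial>count_space UNIV)"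
    by (rule nn_integral_measure_pmf)
  also have "\<dots> = (\<Sum>n. ennreal ((real n)^2 * (r^n / fact n * exp (-r))))"
    using r by (simp add: nn_integral_count_space_nat ennreal_mult'[symmetric] mult.commute)
  also have "\<dots> = ennreal (r + r^2)"
    using poisson_sq[OF r] r by (subst suminf_ennreal2) (auto simp: sums_iff)
  finally show ?thesis .
qed

lemma lN_pos:
  assumes pos: "\<And>i. 1 \<le> i \<Longrightarrow> i \<le> N \<Longrightarrow> lam N i > 0" and N: "N \<ge> 1"
  shows "lN lam N > 0"
  unfolding lN_def using N pos by (intro sum_pos) auto

lemma pmf_M:
  assumes pos: "\<And>i. 1 \<le> i \<Longrightarrow> i \<le> N \<Longrightarrow> lam N i > 0" and N: "N \<ge> 1"
  shows "pmf (M_pmf lam N) m = (if m \<in> {1..N} then lam N m / lN lam N else 0)"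
proof -
  let ?f = "\<lambda>m. if m \<in> {1..N} then lam N m / lN lam N else 0"
  have L: "lN lam N > 0" by (rule lN_pos[where N=N and lam=lam, OF pos N])
  have nn: "\<And>m. 0 \<le> ?f m" using L pos by (auto intro: less_imp_le)
  have "(\<integral>\<^sup>+x. ennreal (?f x) \<partial>count_space UNIV) = (\<Sum>x\<in>{1..N}. ennreal (?f x))"
    by (rule nn_integral_count_space') auto
  also have "\<dots> = ennreal (\<Sum>x\<in>{1..N}. ?f x)" using nn by (intro sum_ennreal) blast
  also have "(\<Sum>x\<in>{1..N}. ?f x) = (\<Sum>x\<in>{1..N}. lam N x / lN lam N)" by (rule sum.cong) auto
  also have "\<dots> = 1" using L by (simp add: sum_divide_distrib[symmetric] lN_def)
  finally have "(\<integral>\<^sup>+x. ennreal (?f x) \<partial>count_space UNIV) = 1" by simp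
  then show ?thesis unfolding M_pmf_def using nn by (subst pmf_embed_pmf) auto
qed

lemma set_M:
  assumes pos: "\<And>i. 1 \<le> i \<Longrightarrow> i \<le> N \<Longrightarrow> lam N i > 0" and N: "N \<ge> 1"
  shows "set_pmf (M_pmf lam N) \<subseteq> {1..N}"
  using pmf_M[where N=N and lam=lam, OF pos N] by (auto simp: set_pmf_iff split: if_splits)

lemma nn_M:
  assumes pos: "\<And>i. 1 \<le> i \<Longrightarrow> i \<le> N \<Longrightarrow> lam N i > 0" and N: "N \<ge> 1"
    and h: "\<And>m. m \<in> {1..N} \<Longrightarrow> h m \<ge> 0"
  shows "(\<integral>\<^sup>+m. ennreal (h m) \<partial>measure_pmf (M_pmf lam N)) = ennreal (\<Sum>m\<in>{1..N}. h m * (lam N m / lN lam N))"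
proof -
  have L: "lN lam N > 0" by (rule lN_pos[where N=N and lam=lam, OF pos N])
  have "(\<integral>\<^sup>+m. ennreal (h m) \<partial>measure_pmf (M_pmf lam N)) = (\<Sum>m\<in>{1..N}. ennreal (h m) * pmf (M_pmf lam N) m)"
    using set_M[where N=N and lam=lam, OF pos N] by (intro nn_integral_measure_pmf_support) auto
  also have "\<dots> = (\<Sum>m\<in>{1..N}. ennreal (h m * (lam N m / lN lam N)))"
  proof (intro sum.cong refl)
    fix x assume x: "x \<in> {1..N}"
    have "0 \<le> lam N x / lN lam N" using L pos[of x] x by simp
    then show "ennreal (h x) * pmf (M_pmf lam N) x = ennreal (h x * (lam N x / lN lam N))"
      using pmf_M[where N=N and lam=lam, OF pos N, of x] x h[OF x] by (simp add: ennreal_mult[symmetric] del: times_divide_eq_right)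
  qed
  also have "\<dots> = ennreal (\<Sum>m\<in>{1..N}. h m * (lam N m / lN lam N))"
  proof (intro sum_ennreal)
    fix m assume m: "m \<in> {1..N}"
    have "0 \<le> lam N m / lN lam N" using L pos[of m] m by simp
    then show "0 \<le> h m * (lam N m / lN lam N)" using h[OF m] by (metis mult_nonneg_nonneg)
  qed
  finally show ?thesis .
qed

lemma d_bind:
  assumes pos: "\<And>i. 1 \<le> i \<Longrightarrow> i \<le> N \<Longrightarrow> lam N i > 0" and N: "N \<ge> 1"
  shows "d_pmf lam N = bind_pmf (M_pmf lam N) (\<lambda>m. poisson_pmf (lam N m))"
proof -
  let ?D = "bind_pmf (M_pmf lam N) (\<lambda>m. poisson_pmf (lam N m))"
  have L: "lN lam N > 0" by (rule lN_pos[where N=N and lam=lam, OF pos N])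
  have eq: "pmf ?D n = gN lam N n" for n
  proof -
    have "pmf ?D n = (\<Sum>m\<in>{1..N}. pmf (poisson_pmf (lam N m)) n * pmf (M_pmf lam N) m)"
      unfolding pmf_bind using set_M[where N=N and lam=lam, OF pos N] by (intro integral_measure_pmf_real) auto
    also have "\<dots> = (\<Sum>m\<in>{1..N}. exp (- lam N m) * (lam N m)^(n+1) / fact n / lN lam N)"
      using pmf_M[where N=N and lam=lam, OF pos N] pos by (intro sum.cong refl) (auto simp: field_simps)
    also have "\<dots> = gN lam N n"
      unfolding gN_def muN_def lN_def using N by (simp add: sum_divide_distrib[symmetric] field_simps)
    finally show ?thesis .
  qed
  have nn: "\<And>n. 0 \<le> gN lam N n" using eq[symmetric] by simp
  have "(\<integral>\<^sup>+x. ennreal (gN lam N x) \<partial>count_space UNIV) = (\<integral>\<^sup>+x. ennreal (pmf ?D x) \<partial>count_space UNIV)"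
    using eq by simp
  also have "\<dots> = 1" by (rule nn_integral_pmf_eq_1)
  finally have "(\<integral>\<^sup>+x. ennreal (gN lam N x) \<partial>count_space UNIV) = 1" .
  then show ?thesis unfolding d_pmf_def
    by (intro pmf_eqI) (simp add: pmf_embed_pmf nn eq)
qed

lemma moments:
  assumes pos: "\<And>i. 1 \<le> i \<Longrightarrow> i \<le> N \<Longrightarrow> lam N i > 0" and N: "N \<ge> 1"
  shows "measure_pmf.variance (M_pmf lam N) (\<lambda>m. lam N m) \<le> Max (lam N ` {1..N}) * nuN lam N"
    and "measure_pmf.variance (d_pmf lam N) (\<lambda>n. real n) \<le> nuN lam N + Max (lam N ` {1..N}) * nuN lam N"
proof -
  define K where "K = Max (lam N ` {1..N})"
  have L: "lN lam N > 0" by (rule lN_pos[where N=N and lam=lam, OF pos N])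
  have le: "lam N m \<le> K" if "m \<in> {1..N}" for m unfolding K_def using that by (intro Max_ge) auto
  have K0: "K \<ge> 0" using le[of 1] pos[of 1] N by force
  have nu: "nuN lam N = (\<Sum>m\<in>{1..N}. (lam N m)^2 / lN lam N)"
    unfolding nuN_def lN_def by (simp add: sum_divide_distrib)
  have nu0: "nuN lam N \<ge> 0" unfolding nu using L by (intro sum_nonneg) simp
  have S: "(\<Sum>m\<in>{1..N}. (lam N m)^2 * (lam N m / lN lam N)) \<le> K * nuN lam N"
  proof -
    have "(\<Sum>m\<in>{1..N}. (lam N m)^2 * (lam N m / lN lam N)) \<le> (\<Sum>m\<in>{1..N}. K * ((lam N m)^2 / lN lam N))"
    proof (intro sum_mono)
      fix m assume m: "m \<in> {1..N}"
      have "(lam N m)^2 * (lam N m / lN lam N) = lam N m * ((lam N m)^2 / lN lam N)" by (simp add: power2_eq_square)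
      also have "\<dots> \<le> K * ((lam N m)^2 / lN lam N)" using le[OF m] L by (intro mult_right_mono) auto
      finally show "(lam N m)^2 * (lam N m / lN lam N) \<le> K * ((lam N m)^2 / lN lam N)" .
    qed
    also have "\<dots> = K * nuN lam N" unfolding nu by (simp add: sum_distrib_left)
    finally show ?thesis .
  qed
  have "(\<integral>\<^sup>+m. ennreal ((lam N m)^2) \<partial>measure_pmf (M_pmf lam N)) = ennreal (\<Sum>m\<in>{1..N}. (lam N m)^2 * (lam N m / lN lam N))"
    by (rule nn_M[where N=N and lam=lam, OF pos N]) auto
  also have "\<dots> \<le> ennreal (K * nuN lam N)" using S by (rule ennreal_leI)
  finally show "measure_pmf.variance (M_pmf lam N) (\<lambda>m. lam N m) \<le> Max (lam N ` {1..N}) * nuN lam N"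
    unfolding K_def[symmetric] by (rule var_bound) (use K0 nu0 in simp)
  have "(\<integral>\<^sup>+n. ennreal ((real n)^2) \<partial>measure_pmf (d_pmf lam N))
      = (\<integral>\<^sup>+m. (\<integral>\<^sup>+n. ennreal ((real n)^2) \<partial>measure_pmf (poisson_pmf (lam N m))) \<partial>measure_pmf (M_pmf lam N))"
    by (simp only: d_bind[where N=N and lam=lam, OF pos N] nn_integral_bind_pmf)
  also have "\<dots> = (\<integral>\<^sup>+m. ennreal (lam N m + (lam N m)^2) \<partial>measure_pmf (M_pmf lam N))"
    using set_M[where N=N and lam=lam, OF pos N] pos
    by (intro nn_integral_cong_AE) (auto simp: AE_measure_pmf_iff poisson_sq_nn)
  also have "\<dots> = ennreal (\<Sum>m\<in>{1..N}. (lam N m + (lam N m)^2) * (lam N m / lN lam N))"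
  proof (intro nn_M[where N=N and lam=lam, OF pos N])
    fix m :: nat assume "m \<in> {1..N}"
    then have "lam N m > 0" using pos by auto
    then show "0 \<le> lam N m + (lam N m)^2" by (simp add: add_nonneg_nonneg)
  qed
  also have "(\<Sum>m\<in>{1..N}. (lam N m + (lam N m)^2) * (lam N m / lN lam N))
     = nuN lam N + (\<Sum>m\<in>{1..N}. (lam N m)^2 * (lam N m / lN lam N))"
    unfolding nu sum.distrib[symmetric] by (intro sum.cong refl) (simp add: field_simps power2_eq_square add_divide_distrib)
  also have "ennreal \<dots> \<le> ennreal (nuN lam N + K * nuN lam N)" using S by (intro ennreal_leI) simp
  finally show "measure_pmf.variance (d_pmf lam N) (\<lambda>n. real n) \<le> nuN lam N + Max (lam N ` {1..N}) * nuN lam N"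
    unfolding K_def[symmetric] by (rule var_bound) (use K0 nu0 in simp)
qed

theorem lemmaD5:
  fixes lam :: "nat \<Rightarrow> nat \<Rightarrow> real"
    and \<mu> \<nu> \<alpha>1 \<alpha>2 \<tau> :: real
    and f g :: "nat \<Rightarrow> real"
  assumes pos: "\<And>N i. 1 \<le> i \<Longrightarrow> i \<le> N \<Longrightarrow> lam N i > 0"
    and C1: "\<mu> > 0" "\<nu> > 1" "\<alpha>1 > 0"
      "(\<lambda>N. \<bar>muN lam N - \<mu>\<bar>) \<in> O(\<lambda>N. real N powr (- \<alpha>1))"
      "(\<lambda>N. \<bar>nuN lam N - \<nu>\<bar>) \<in> O(\<lambda>N. real N powr (- \<alpha>1))"
    and C2: "\<alpha>2 > 0"
      "\<And>N. summable (\<lambda>j. \<bar>fN lam N j - f j\<bar>)"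
      "\<And>N. summable (\<lambda>j. \<bar>gN lam N j - g j\<bar>)"
      "(\<lambda>N. dTV (fN lam N) f) \<in> O(\<lambda>N. real N powr (- \<alpha>2))"
      "(\<lambda>N. dTV (gN lam N) g) \<in> O(\<lambda>N. real N powr (- \<alpha>2))"
    and C3: "\<tau> > 3"
      "\<And>\<epsilon>. \<epsilon> > 0 \<Longrightarrow> 1 / (\<tau> - 1) + \<epsilon> < 1/2 \<Longrightarrow>
          limsup (\<lambda>N. ereal ((1 / real N) * (\<Sum>i=1..N. lam N i powr (\<tau> - 1 - \<epsilon>)))) < \<infinity>
          \<and> (\<forall>N \<ge> 1. Max (lam N ` {1..N}) \<le> real N powr (1 / (\<tau> - 1) + \<epsilon>))"
  shows "\<forall>\<epsilon>>0. 1 / (\<tau> - 1) + \<epsilon> < 1/2 \<longrightarrow>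
      (\<lambda>N. measure_pmf.variance (M_pmf lam N) (\<lambda>m. lam N m))
         \<in> O(\<lambda>N. real N powr (1 / (\<tau> - 1) + \<epsilon>))
    \<and> (\<lambda>N. measure_pmf.variance (d_pmf lam N) (\<lambda>n. real n))
         \<in> O(\<lambda>N. real N powr (1 / (\<tau> - 1) + \<epsilon>))"
proof (intro allI impI)
  fix \<epsilon> :: real assume e: "\<epsilon> > 0" "1 / (\<tau> - 1) + \<epsilon> < 1/2"
  define \<gamma> where "\<gamma> = 1 / (\<tau> - 1) + \<epsilon>"
  have g0: "\<gamma> > 0" unfolding \<gamma>_def using C3(1) e(1) by (simp add: add_pos_pos)
  have hmax: "\<forall>N \<ge> 1. Max (lam N ` {1..N}) \<le> real N powr \<gamma>"
    using C3(2)[OF e] unfolding \<gamma>_def by blast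
  from C1(5) obtain c where c: "c > 0"
    "eventually (\<lambda>N. norm \<bar>nuN lam N - \<nu>\<bar> \<le> c * norm (real N powr (- \<alpha>1))) at_top"
    by (elim landau_o.bigE) auto
  define B where "B = \<nu> + c"
  have B0: "B > 0" unfolding B_def using C1(2) c(1) by simp
  have ev: "eventually (\<lambda>N. N \<ge> 1 \<and> nuN lam N \<le> B) at_top"
    using c(2) eventually_ge_at_top[of "1::nat"]
  proof eventually_elim
    case (elim N)
    have "1 \<le> real N powr \<alpha>1" using elim(2) C1(3) by (intro ge_one_powr_ge_zero) auto
    then have "real N powr (- \<alpha>1) \<le> 1" unfolding powr_minus inverse_le_1_iff by simp
    moreover have "real N powr (- \<alpha>1) \<ge> 0" by simp
    ultimately have "c * norm (real N powr (- \<alpha>1)) \<le> c" using c(1) by (simp add: mult_le_cancel_left1)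
    then show ?case using elim unfolding B_def by auto
  qed
  have bnds: "eventually (\<lambda>N. norm (measure_pmf.variance (M_pmf lam N) (\<lambda>m. lam N m)) \<le> (2*B) * norm (real N powr \<gamma>)
      \<and> norm (measure_pmf.variance (d_pmf lam N) (\<lambda>n. real n)) \<le> (2*B) * norm (real N powr \<gamma>)) at_top"
    using ev
  proof eventually_elim
    case (elim N)
    then have N: "N \<ge> 1" and nB: "nuN lam N \<le> B" by auto
    have posN: "\<And>i. 1 \<le> i \<Longrightarrow> i \<le> N \<Longrightarrow> lam N i > 0" using pos by blast
    define K where "K = Max (lam N ` {1..N})"
    have KN: "K \<le> real N powr \<gamma>" using hmax N unfolding K_def by blast
    have K0: "K \<ge> 0" unfolding K_def using pos[of 1 N] N
      by (meson Max_ge atLeastAtMost_iff finite_atLeastAtMost finite_imageI image_eqI le_refl less_imp_le order_trans)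
    have P1: "1 \<le> real N powr \<gamma>" using N g0 by (intro ge_one_powr_ge_zero) auto
    have L: "lN lam N > 0" by (rule lN_pos[where N=N and lam=lam, OF posN N])
    have nu0: "nuN lam N \<ge> 0" unfolding nuN_def lN_def[symmetric] using L
      by (intro divide_nonneg_pos sum_nonneg) auto
    have KB: "K * nuN lam N \<le> real N powr \<gamma> * B" using KN nB K0 nu0 by (intro mult_mono) auto
    have v1: "measure_pmf.variance (M_pmf lam N) (\<lambda>m. lam N m) \<le> K * nuN lam N"
      unfolding K_def by (rule moments(1)[where N=N and lam=lam, OF posN N])
    have v2: "measure_pmf.variance (d_pmf lam N) (\<lambda>n. real n) \<le> nuN lam N + K * nuN lam N"
      unfolding K_def by (rule moments(2)[where N=N and lam=lam, OF posN N])
    have a1: "0 \<le> measure_pmf.variance (M_pmf lam N) (\<lambda>m. lam N m)" by (rule measure_pmf.variance_positive)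
    have a2: "0 \<le> measure_pmf.variance (d_pmf lam N) (\<lambda>n. real n)" by (rule measure_pmf.variance_positive)
    have BB: "B \<le> B * real N powr \<gamma>" using P1 B0 by simp
    have P0: "0 \<le> real N powr \<gamma>" by simp
    have e1: "real N powr \<gamma> * B = B * real N powr \<gamma>" "2*B*real N powr \<gamma> = B*real N powr \<gamma> + B*real N powr \<gamma>"
      by (simp_all add: algebra_simps)
    have PB: "0 \<le> B*real N powr \<gamma>" using B0 P0 by simp
    have "K * nuN lam N \<le> (2*B) * real N powr \<gamma>" using KB BB e1 PB by linarith
    moreover have "nuN lam N + K * nuN lam N \<le> (2*B) * real N powr \<gamma>" using KB BB nB e1 by linarith
    ultimately show ?case using v1 v2 a1 a2 P0 by simp
  qed
  show "(\<lambda>N. measure_pmf.variance (M_pmf lam N) (\<lambda>m. lam N m))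
         \<in> O(\<lambda>N. real N powr (1 / (\<tau> - 1) + \<epsilon>))
    \<and> (\<lambda>N. measure_pmf.variance (d_pmf lam N) (\<lambda>n. real n))
         \<in> O(\<lambda>N. real N powr (1 / (\<tau> - 1) + \<epsilon>))"
    unfolding \<gamma>_def[symmetric]
    by (intro conjI landau_o.bigI[of "2*B"]) (use B0 bnds in \<open>auto elim: eventually_mono\<close>)
qed

end
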